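(* Let $S=\{x\in\mathbb{R}^n\mid h_i^Tx\le b_i,\ i=1,\dots,r\}$ be a polyhedron, let $q:\mathbb{R}^{n\times n}\to\mathbb{R}$ be a strictly convex quadratic function and $U_0=\{A\in\mathbb{R}^{n\times n}\mid q(A)\le 0\}$, let $A_\star\in U_0$, let $x_1,\dots,x_k\in\mathbb{R}^n$, let $U_k=\{A\in U_0\mid Ax_j=A_\star x_j,\ A^2x_j=A_\star^2x_j,\ j=1,\dots,k\}$, and let $c\in\mathbb{R}^n$. Then the problem $$\min_{x\in\mathbb{R}^n} c^Tx\quad\text{s.t. } x\in S,\quad Ax\in S\ \ \forall A\in U_k,\quad A^2x\in S\ \ \forall A\in U_k$$ can be reformulated as a semidefinite program involving $3r$ scalar inequalities and $2r$ positive semidefinite constraints on matrices of size at most $(n^2+1)\times(n^2+1)$.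
   Context: Setting: the unknown linear system $x_{t+1}=A_\star x_t$ with ellipsoidal uncertainty set $U_0$; the data are $k$ observed length-two trajectories $(x_j,A_\star x_j,A_\star^2x_j)$. The feasible set of the displayed problem is the set of points that remain in $S$ for two steps under every matrix consistent with $U_0$ and the data. *)

theory Defs
  imports "HOL-Analysis.Analysis"
begin

text \<open>Polyhedron S = {x | h_i^T x <= b_i, i = 1..r} (indices shifted to 0..r-1).\<close>
definition polyS :: "nat \<Rightarrow> (nat \<Rightarrow> real^'n) \<Rightarrow> (nat \<Rightarrow> real) \<Rightarrow> (real^'n) set" where
  "polyS r h b = {x. \<forall>i<r. h i \<bullet> x \<le> b i}"

definition is_quadratic :: "(real^'n^'n \<Rightarrow> real) \<Rightarrow> bool" where
  "is_quadratic q \<longleftrightarrow> (\<exists>(Q::'n\<Rightarrow>'n\<Rightarrow>'n\<Rightarrow>'n\<Rightarrow>real) (L::'n\<Rightarrow>'n\<Rightarrow>real) (c0::real).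
     \<forall>A. q A = (\<Sum>i\<in>UNIV. \<Sum>j\<in>UNIV. \<Sum>k\<in>UNIV. \<Sum>l\<in>UNIV. Q i j k l * (A$i$j) * (A$k$l))
              + (\<Sum>i\<in>UNIV. \<Sum>j\<in>UNIV. L i j * (A$i$j)) + c0)"

definition strictly_convex :: "('a::real_vector \<Rightarrow> real) \<Rightarrow> bool" where
  "strictly_convex f \<longleftrightarrow> (\<forall>x y t. x \<noteq> y \<and> 0 < t \<and> t < 1 \<longrightarrow>
      f ((1 - t) *\<^sub>R x + t *\<^sub>R y) < (1 - t) * f x + t * f y)"

definition U0 :: "(real^'n^'n \<Rightarrow> real) \<Rightarrow> (real^'n^'n) set" where
  "U0 q = {A. q A \<le> 0}"

definition Uk :: "(real^'n^'n \<Rightarrow> real) \<Rightarrow> real^'n^'n \<Rightarrow> (nat \<Rightarrow> real^'n) \<Rightarrow> nat \<Rightarrow> (real^'n^'n) set" where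
  "Uk q Astar xs k = {A \<in> U0 q. \<forall>j<k. A *v xs j = Astar *v xs j \<and>
                                    (A ** A) *v xs j = (Astar ** Astar) *v xs j}"

definition robust_feasible ::
  "nat \<Rightarrow> (nat \<Rightarrow> real^'n) \<Rightarrow> (nat \<Rightarrow> real) \<Rightarrow> (real^'n^'n \<Rightarrow> real) \<Rightarrow> real^'n^'n
   \<Rightarrow> (nat \<Rightarrow> real^'n) \<Rightarrow> nat \<Rightarrow> (real^'n) set" where
  "robust_feasible r h b q Astar xs k =
     {x. x \<in> polyS r h b \<and> (\<forall>A\<in>Uk q Astar xs k. A *v x \<in> polyS r h b)
                        \<and> (\<forall>A\<in>Uk q Astar xs k. (A ** A) *v x \<in> polyS r h b)}"

definition psd :: "nat \<Rightarrow> (nat \<Rightarrow> nat \<Rightarrow> real) \<Rightarrow> bool" where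
  "psd m M \<longleftrightarrow> (\<forall>a<m. \<forall>b<m. M a b = M b a) \<and>
                (\<forall>v. 0 \<le> (\<Sum>a<m. \<Sum>b<m. v a * M a b * v b))"

definition aff_scalar :: "nat \<Rightarrow> real \<Rightarrow> real^'n \<Rightarrow> (nat \<Rightarrow> real) \<Rightarrow> real^'n \<Rightarrow> (nat \<Rightarrow> real) \<Rightarrow> real" where
  "aff_scalar N a0 ax az x z = a0 + ax \<bullet> x + (\<Sum>l<N. az l * z l)"

definition aff_matrix :: "nat \<Rightarrow> (nat \<Rightarrow> nat \<Rightarrow> real) \<Rightarrow> ('n \<Rightarrow> nat \<Rightarrow> nat \<Rightarrow> real)
     \<Rightarrow> (nat \<Rightarrow> nat \<Rightarrow> nat \<Rightarrow> real) \<Rightarrow> real^'n \<Rightarrow> (nat \<Rightarrow> real) \<Rightarrow> nat \<Rightarrow> nat \<Rightarrow> real" where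
  "aff_matrix N F0 Fx Fz x z = (\<lambda>a b. F0 a b + (\<Sum>i\<in>UNIV. x$i * Fx i a b) + (\<Sum>l<N. z l * Fz l a b))"

text \<open>Constraints of an SDP with p scalar affine inequalities (each "<= 0") and
  s linear matrix inequalities, in the variables x and auxiliary z_0..z_{N-1}.\<close>
definition sdp_constraints ::
  "nat \<Rightarrow> nat \<Rightarrow> nat
   \<Rightarrow> (nat \<Rightarrow> real) \<Rightarrow> (nat \<Rightarrow> real^'n) \<Rightarrow> (nat \<Rightarrow> nat \<Rightarrow> real)
   \<Rightarrow> (nat \<Rightarrow> nat) \<Rightarrow> (nat \<Rightarrow> nat \<Rightarrow> nat \<Rightarrow> real) \<Rightarrow> (nat \<Rightarrow> 'n \<Rightarrow> nat \<Rightarrow> nat \<Rightarrow> real)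
   \<Rightarrow> (nat \<Rightarrow> nat \<Rightarrow> nat \<Rightarrow> nat \<Rightarrow> real)
   \<Rightarrow> real^'n \<Rightarrow> (nat \<Rightarrow> real) \<Rightarrow> bool" where
  "sdp_constraints N p s a0 ax az m F0 Fx Fz x z \<longleftrightarrow>
     (\<forall>i<p. aff_scalar N (a0 i) (ax i) (az i) x z \<le> 0) \<and>
     (\<forall>t<s. psd (m t) (aff_matrix N (F0 t) (Fx t) (Fz t) x z))"

end

theory Submission
  imports Defs
begin

definition qform :: "('a::real_vector \<Rightarrow> real) \<Rightarrow> bool" where
  "qform F \<longleftrightarrow> (\<exists>\<beta>. bilinear \<beta> \<and> (\<forall>w. F w = \<beta> w w))"

definition polar :: "('a::real_vector \<Rightarrow> real) \<Rightarrow> 'a \<Rightarrow> 'a \<Rightarrow> real" where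
  "polar F u v = (F (u + v) - F u - F v) / 2"

lemma qform_polar:
  assumes "bilinear \<beta>" "\<forall>w. F w = \<beta> w w"
  shows "polar F u v = (\<beta> u v + \<beta> v u) / 2"
  using assms by (simp add: polar_def bilinear_ladd bilinear_radd)

lemma qform_expand:
  assumes "qform F"
  shows "F (c *\<^sub>R u + d *\<^sub>R v) = c^2 * F u + 2 * c * d * polar F u v + d^2 * F v"
proof -
  obtain \<beta> where b: "bilinear \<beta>" "\<forall>w. F w = \<beta> w w" using assms qform_def by blast
  show ?thesis using b
    by (simp add: qform_polar[OF b] bilinear_ladd bilinear_radd bilinear_lmul bilinear_rmul
        power2_eq_square algebra_simps)
qed

lemma qform_scale: "qform F \<Longrightarrow> F (s *\<^sub>R u) = s^2 * F u"
  using qform_expand[of F s u 0 0] by (simp add: polar_def)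

lemma qform_zero: "qform F \<Longrightarrow> F 0 = 0"
  using qform_scale[of F 0 0] by simp

lemma bilinearI:
  assumes "\<And>x y z. \<beta> (x + y) z = \<beta> x z + \<beta> y z"
    "\<And>x y z. \<beta> x (y + z) = \<beta> x y + \<beta> x z"
    "\<And>c x y. \<beta> (c *\<^sub>R x) y = c *\<^sub>R \<beta> x y"
    "\<And>c x y. \<beta> x (c *\<^sub>R y) = c *\<^sub>R \<beta> x y"
  shows "bilinear \<beta>"
  using assms by (simp add: bilinear_def linear_iff)

lemma qform_lin:
  assumes "qform F" "qform G"
  shows "qform (\<lambda>w. a * F w + b * G w)"
proof -
  obtain \<beta> where b: "bilinear \<beta>" "\<forall>w. F w = \<beta> w w" using assms qform_def by blast
  obtain \<gamma> where c: "bilinear \<gamma>" "\<forall>w. G w = \<gamma> w w" using assms qform_def by blast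
  have "bilinear (\<lambda>x y. a * \<beta> x y + b * \<gamma> x y)"
    using b(1) c(1)
    by (intro bilinearI) (simp_all add: bilinear_ladd bilinear_radd bilinear_lmul bilinear_rmul algebra_simps)
  then show ?thesis unfolding qform_def using b c by (intro exI[of _ "\<lambda>x y. a * \<beta> x y + b * \<gamma> x y"]) auto
qed

lemma sq_root2:
  fixes p q :: real
  shows "\<exists>s t. s^2 - t^2 = p \<and> 2 * s * t = q \<and> s^2 + t^2 = sqrt (p^2 + q^2)"
proof -
  define z where "z = csqrt (Complex p q)"
  have "z^2 = Complex p q" by (simp add: z_def)
  then have e1: "Re z ^2 - Im z ^2 = p" and e2: "2 * Re z * Im z = q"
    by (metis Re_power2 complex.sel(1), metis Im_power2 complex.sel(2))
  have "(Re z ^2 + Im z ^2)^2 = (Re z ^2 - Im z ^2)^2 + (2 * Re z * Im z)^2" by algebra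
  then have "(Re z ^2 + Im z ^2)^2 = p^2 + q^2" using e1 e2 by simp
  then have "Re z ^2 + Im z ^2 = sqrt (p^2 + q^2)"
    by (metis add_nonneg_nonneg real_sqrt_abs zero_le_power2 abs_of_nonneg)
  then show ?thesis using e1 e2 by blast
qed

lemma twoD:
  assumes U: "qform U" and W: "qform W"
    and s0: "U d1 + U d2 = 0" and s1: "W d1 + W d2 > 0"
  shows "\<exists>z. U z = 0 \<and> W z > 0"
proof (cases "U d1 = 0 \<and> polar U d1 d2 = 0")
  case True
  then have "U d2 = 0" using s0 by simp
  moreover have "W d1 > 0 \<or> W d2 > 0" using s1 by linarith
  ultimately show ?thesis using True by blast
next
  case False
  define u11 where "u11 = U d1"
  define u12 where "u12 = polar U d1 d2"
  define \<rho> where "\<rho> = sqrt (u12^2 + u11^2)"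
  have u22: "U d2 = - u11" using s0 u11_def by simp
  have hz: "U (s *\<^sub>R d1 + t *\<^sub>R d2) = 0 \<and>
            W (s *\<^sub>R d1 + t *\<^sub>R d2) = W d1 * (\<rho> + p)/2 + polar W d1 d2 * q + W d2 * (\<rho> - p)/2"
    if st: "s^2 - t^2 = p" "2 * s * t = q" "s^2 + t^2 = sqrt (p^2 + q^2)"
       and pq: "p * u11 + q * u12 = 0" "p^2 + q^2 = u12^2 + u11^2" for s t p q
  proof -
    have s2: "s^2 = (\<rho> + p)/2" and t2: "t^2 = (\<rho> - p)/2"
      using st pq(2) unfolding \<rho>_def by auto
    have "U (s *\<^sub>R d1 + t *\<^sub>R d2) = s^2 * u11 + 2 * s * t * u12 - t^2 * u11"
      using qform_expand[OF U] u22 u11_def u12_def by simp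
    also have "\<dots> = (s^2 - t^2) * u11 + (2 * s * t) * u12" by (simp add: algebra_simps)
    also have "\<dots> = 0" using st pq by simp
    finally have 1: "U (s *\<^sub>R d1 + t *\<^sub>R d2) = 0" .
    have "W (s *\<^sub>R d1 + t *\<^sub>R d2) = s^2 * W d1 + (2 * s * t) * polar W d1 d2 + t^2 * W d2"
      using qform_expand[OF W] by simp
    then show ?thesis using 1 s2 t2 st(2) by (simp add: mult.commute)
  qed
  obtain s1 t1 where a: "s1^2 - t1^2 = - u12" "2 * s1 * t1 = u11" "s1^2 + t1^2 = sqrt ((-u12)^2 + u11^2)"
    using sq_root2 by blast
  obtain s2 t2 where b: "s2^2 - t2^2 = u12" "2 * s2 * t2 = - u11" "s2^2 + t2^2 = sqrt (u12^2 + (-u11)^2)"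
    using sq_root2 by blast
  have A: "U (s1 *\<^sub>R d1 + t1 *\<^sub>R d2) = 0 \<and>
      W (s1 *\<^sub>R d1 + t1 *\<^sub>R d2) = W d1 * (\<rho> - u12)/2 + polar W d1 d2 * u11 + W d2 * (\<rho> + u12)/2"
    using hz[OF a] by (simp add: algebra_simps)
  have B: "U (s2 *\<^sub>R d1 + t2 *\<^sub>R d2) = 0 \<and>
      W (s2 *\<^sub>R d1 + t2 *\<^sub>R d2) = W d1 * (\<rho> + u12)/2 - polar W d1 d2 * u11 + W d2 * (\<rho> - u12)/2"
    using hz[OF b] by (simp add: algebra_simps)
  have "\<rho> > 0" using False unfolding \<rho>_def u11_def u12_def
    by (auto simp add: sum_power2_gt_zero_iff)
  then have "(W d1 + W d2) * \<rho> > 0" using s1 by simp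
  moreover have "W (s1 *\<^sub>R d1 + t1 *\<^sub>R d2) + W (s2 *\<^sub>R d1 + t2 *\<^sub>R d2) = (W d1 + W d2) * \<rho>"
    unfolding A[THEN conjunct2] B[THEN conjunct2] by (simp add: field_simps)
  ultimately have "W (s1 *\<^sub>R d1 + t1 *\<^sub>R d2) > 0 \<or> W (s2 *\<^sub>R d1 + t2 *\<^sub>R d2) > 0"
    by linarith
  then show ?thesis using A B by blast
qed

lemma qform_pm:
  assumes "qform F" "0 \<le> a" "0 \<le> b"
  shows "F (sqrt a *\<^sub>R w1 + sqrt b *\<^sub>R w2) + F (sqrt a *\<^sub>R w1 + (- sqrt b) *\<^sub>R w2)
         = 2 * a * F w1 + 2 * b * F w2"
  using qform_expand[OF assms(1), of "sqrt a" w1 "sqrt b" w2]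
    qform_expand[OF assms(1), of "sqrt a" w1 "- sqrt b" w2] assms(2,3)
  by simp

lemma dines:
  assumes F: "qform F" and G: "qform G"
  shows "convex (range (\<lambda>w. (F w, G w)))"
  unfolding convex_def
proof (intro ballI allI impI)
  fix x y and a b :: real
  assume x: "x \<in> range (\<lambda>w. (F w, G w))" and y: "y \<in> range (\<lambda>w. (F w, G w))"
    and ab: "0 \<le> a" "0 \<le> b" "a + b = 1"
  obtain w1 where w1: "x = (F w1, G w1)" using x by blast
  obtain w2 where w2: "y = (F w2, G w2)" using y by blast
  define P1 where "P1 = a * F w1 + b * F w2"
  define P2 where "P2 = a * G w1 + b * G w2"
  have Pe: "a *\<^sub>R x + b *\<^sub>R y = (P1, P2)" using w1 w2 P1_def P2_def by simp
  show "a *\<^sub>R x + b *\<^sub>R y \<in> range (\<lambda>w. (F w, G w))"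
  proof (cases "P1 = 0 \<and> P2 = 0")
    case True
    then show ?thesis unfolding Pe using qform_zero[OF F] qform_zero[OF G]
      by (intro range_eqI[where x=0]) simp
  next
    case False
    define d1 where "d1 = sqrt a *\<^sub>R w1 + sqrt b *\<^sub>R w2"
    define d2 where "d2 = sqrt a *\<^sub>R w1 + (- sqrt b) *\<^sub>R w2"
    have sF: "F d1 + F d2 = 2 * P1" using qform_pm[OF F ab(1,2)] P1_def d1_def d2_def by simp
    have sG: "G d1 + G d2 = 2 * P2" using qform_pm[OF G ab(1,2)] P2_def d1_def d2_def by simp
    define U where "U = (\<lambda>w. P2 * F w + (- P1) * G w)"
    define W where "W = (\<lambda>w. P1 * F w + P2 * G w)"
    have qU: "qform U" unfolding U_def by (rule qform_lin[OF F G])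
    have qW: "qform W" unfolding W_def by (rule qform_lin[OF F G])
    have pos: "P1^2 + P2^2 > 0" using False by (auto simp: sum_power2_gt_zero_iff)
    have "U d1 + U d2 = P2 * (F d1 + F d2) - P1 * (G d1 + G d2)" unfolding U_def by (simp add: algebra_simps)
    then have u0: "U d1 + U d2 = 0" using sF sG by simp
    have "W d1 + W d2 = P1 * (F d1 + F d2) + P2 * (G d1 + G d2)" unfolding W_def by (simp add: algebra_simps)
    also have "\<dots> = 2 * (P1^2 + P2^2)" using sF sG by (simp add: power2_eq_square)
    finally have w0: "W d1 + W d2 > 0" using pos by simp
    obtain z where z: "U z = 0" "W z > 0" using twoD[OF qU qW u0 w0] by blast
    define \<kappa> where "\<kappa> = W z / (P1^2 + P2^2)"
    have kpos: "\<kappa> > 0" using z pos \<kappa>_def by simp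
    have e1: "P2 * F z = P1 * G z" using z(1) unfolding U_def by simp
    have "F z * (P1^2 + P2^2) = P1 * (P1 * F z) + P2 * (P2 * F z)" by (simp add: power2_eq_square algebra_simps)
    also have "\<dots> = P1 * (P1 * F z) + P2 * (P1 * G z)" by (simp only: e1)
    also have "\<dots> = P1 * W z" by (simp add: W_def algebra_simps)
    finally have "F z * (P1^2 + P2^2) = P1 * W z" .
    then have "F z = P1 * W z / (P1^2 + P2^2)" using pos False by (subst eq_divide_eq) simp
    then have Fz: "F z = \<kappa> * P1" unfolding \<kappa>_def by simp
    have "G z * (P1^2 + P2^2) = P1 * (P1 * G z) + P2 * (P2 * G z)" by (simp add: power2_eq_square algebra_simps)
    also have "\<dots> = P1 * (P2 * F z) + P2 * (P2 * G z)" by (simp only: e1)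
    also have "\<dots> = P2 * W z" by (simp add: W_def algebra_simps)
    finally have "G z * (P1^2 + P2^2) = P2 * W z" .
    then have "G z = P2 * W z / (P1^2 + P2^2)" using pos False by (subst eq_divide_eq) simp
    then have Gz: "G z = \<kappa> * P2" unfolding \<kappa>_def by simp
    define w where "w = (1 / sqrt \<kappa>) *\<^sub>R z"
    have "F w = P1" "G w = P2"
      using qform_scale[OF F, of "1 / sqrt \<kappa>" z] qform_scale[OF G, of "1 / sqrt \<kappa>" z] Fz Gz kpos
      unfolding w_def by (simp_all add: power_divide)
    then show ?thesis unfolding Pe by (intro range_eqI[where x=w]) simp
  qed
qed

lemma S_hom:
  assumes F: "qform F" and G: "qform G" and w0: "G w0 < 0"
    and hyp: "\<forall>w. G w < 0 \<longrightarrow> F w \<le> 0"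
  shows "\<exists>l\<ge>0. \<forall>w. F w \<le> l * G w"
proof -
  define K where "K = range (\<lambda>w. (F w, G w))"
  define C where "C = {p::real\<times>real. fst p > 0 \<and> snd p < 0}"
  have cK: "convex K" unfolding K_def by (rule dines[OF F G])
  have cC: "convex C" unfolding C_def convex_def
  proof (intro ballI allI impI)
    fix x y :: "real \<times> real" and u v :: real
    assume x: "x \<in> {p. fst p > 0 \<and> snd p < 0}" and y: "y \<in> {p. fst p > 0 \<and> snd p < 0}"
      and uv: "0 \<le> u" "0 \<le> v" "u + v = 1"
    have "u * fst x + v * fst y > 0 \<and> u * snd x + v * snd y < 0"
    proof (cases "u = 0")
      case True then show ?thesis using x y uv by simp
    next
      case False
      then have "u > 0" using uv by simp
      then have "u * fst x > 0" "u * snd x < 0" using x by (simp_all add: mult_pos_neg)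
      moreover have "v * fst y \<ge> 0" "v * snd y \<le> 0" using y uv by (simp_all add: mult_nonneg_nonpos)
      ultimately show ?thesis by linarith
    qed
    then show "u *\<^sub>R x + v *\<^sub>R y \<in> {p. fst p > 0 \<and> snd p < 0}" by simp
  qed
  have neK: "K \<noteq> {}" unfolding K_def by simp
  have "(1, -1) \<in> C" unfolding C_def by simp
  then have neC: "C \<noteq> {}" by blast
  have dis: "K \<inter> C = {}" unfolding K_def C_def using hyp by force
  obtain a \<beta> where a: "a \<noteq> 0" "\<forall>x\<in>K. inner a x \<le> \<beta>" "\<forall>x\<in>C. inner a x \<ge> \<beta>"
    using separating_hyperplane_sets[OF cK cC neK neC dis] by blast
  obtain \<mu> \<nu> where a2: "a = (\<mu>, \<nu>)" by (cases a)
  have Kw: "\<mu> * F w + \<nu> * G w \<le> \<beta>" for w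
    using a(2) a2 unfolding K_def by (auto simp: inner_Pair)
  have b0: "\<beta> \<ge> 0" using Kw[of 0] qform_zero[OF F] qform_zero[OF G] by simp
  have Cp: "\<mu> * p + \<nu> * q \<ge> \<beta>" if "p > 0" "q < 0" for p q
    using a(3) a2 that unfolding C_def by (auto simp: inner_Pair)
  have K0: "\<mu> * F w + \<nu> * G w \<le> 0" for w
  proof (rule ccontr)
    assume "\<not> ?thesis"
    then have X: "\<mu> * F w + \<nu> * G w > 0" by simp
    define s where "s = sqrt ((\<beta> + 1) / (\<mu> * F w + \<nu> * G w))"
    have s2: "s^2 = (\<beta> + 1) / (\<mu> * F w + \<nu> * G w)" unfolding s_def using X b0 by simp
    have "\<mu> * F (s *\<^sub>R w) + \<nu> * G (s *\<^sub>R w) = s^2 * (\<mu> * F w + \<nu> * G w)"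
      using qform_scale[OF F] qform_scale[OF G] by (simp add: algebra_simps)
    also have "\<dots> = \<beta> + 1" using s2 X by simp
    finally show False using Kw[of "s *\<^sub>R w"] by simp
  qed
  have mu: "\<mu> \<ge> 0"
  proof (rule ccontr)
    assume m: "\<not> ?thesis"
    show False
    proof (cases "\<nu> \<ge> 0")
      case True
      then show False using Cp[of 1 "-1"] b0 m by simp
    next
      case False
      have "\<mu> * 1 + \<nu> * (- (\<mu> / (2 * \<nu>))) = \<mu> / 2" using False by (simp add: field_simps)
      moreover have "- (\<mu> / (2 * \<nu>)) < 0" using False m by (simp add: divide_neg_neg)
      ultimately show False using Cp[of 1 "- (\<mu> / (2 * \<nu>))"] b0 m by simp
    qed
  qed
  have nu: "\<nu> \<le> 0"
  proof (rule ccontr)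
    assume m: "\<not> ?thesis"
    show False
    proof (cases "\<mu> \<le> 0")
      case True
      then show False using Cp[of 1 "-1"] b0 m by simp
    next
      case False
      have "\<mu> * (\<nu> / (2 * \<mu>)) + \<nu> * (- 1) = - \<nu> / 2" using False by (simp add: field_simps)
      moreover have "\<nu> / (2 * \<mu>) > 0" using False m by simp
      ultimately show False using Cp[of "\<nu> / (2 * \<mu>)" "- 1"] b0 m by simp
    qed
  qed
  have mpos: "\<mu> > 0"
  proof (rule ccontr)
    assume "\<not> ?thesis"
    then have "\<mu> = 0" using mu by simp
    then have "\<nu> < 0" using a a2 nu by (auto simp: zero_prod_def)
    then show False using K0[of w0] w0 \<open>\<mu> = 0\<close> mult_neg_neg[of \<nu> "G w0"] by simp
  qed
  show ?thesis
  proof (intro exI[of _ "- \<nu> / \<mu>"] conjI allI)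
    show "0 \<le> - \<nu> / \<mu>" using mpos nu by (simp add: divide_nonpos_pos)
    fix w
    have "\<mu> * F w \<le> - \<nu> * G w" using K0[of w] by simp
    then show "F w \<le> - \<nu> / \<mu> * G w" using mpos by (simp add: field_simps)
  qed
qed

definition qfun :: "('a::real_vector \<Rightarrow> real) \<Rightarrow> bool" where
  "qfun f \<longleftrightarrow> (\<exists>B L c. bilinear B \<and> linear L \<and> (\<forall>x. f x = B x x + L x + c))"

definition hom :: "('a::real_vector \<Rightarrow> real) \<Rightarrow> 'a \<times> real \<Rightarrow> real" where
  "hom f w = (f (fst w) + f (- fst w)) / 2 - f 0 + snd w * ((f (fst w) - f (- fst w)) / 2) + (snd w)^2 * f 0"

lemma hom_rep:
  assumes "bilinear B" "linear L" "\<forall>x. f x = B x x + L x + c"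
  shows "hom f (x, t) = B x x + t * L x + t^2 * c"
  using assms by (simp add: hom_def bilinear_lneg bilinear_rneg linear_neg linear_0 bilinear_lzero field_simps)

lemma hom_one: "hom f (x, 1) = f x"
  by (simp add: hom_def field_simps)

lemma qform_hom:
  assumes "qfun f" shows "qform (hom f)"
proof -
  obtain B L c where r: "bilinear B" "linear L" "\<forall>x. f x = B x x + L x + c"
    using assms qfun_def by blast
  define \<beta> where "\<beta> = (\<lambda>p q. B (fst p) (fst q) + snd p * L (fst q) + snd p * snd q * c)"
  have "bilinear \<beta>" unfolding \<beta>_def using r(1,2)
    by (intro bilinearI) (simp_all add: bilinear_ladd bilinear_radd bilinear_lmul bilinear_rmul
        linear_add linear_scale algebra_simps)
  moreover have "\<forall>w. hom f w = \<beta> w w"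
    using hom_rep[OF r] unfolding \<beta>_def by (auto simp: power2_eq_square)
  ultimately show ?thesis unfolding qform_def by blast
qed

lemma hom_scale:
  assumes "qfun f" "t \<noteq> 0"
  shows "hom f (x, t) = t^2 * f ((1 / t) *\<^sub>R x)"
proof -
  obtain B L c where r: "bilinear B" "linear L" "\<forall>x. f x = B x x + L x + c"
    using assms qfun_def by blast
  show ?thesis using assms(2)
    by (simp add: hom_rep[OF r] r(3) bilinear_lmul[OF r(1)] bilinear_rmul[OF r(1)]
        linear_scale[OF r(2)] power2_eq_square field_simps)
qed

lemma hom_limit:
  assumes "qfun f"
  shows "((\<lambda>t. hom f (x, t)) \<longlongrightarrow> hom f (x, 0)) (at_right 0)"
proof -
  obtain B L c where r: "bilinear B" "linear L" "\<forall>x. f x = B x x + L x + c"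
    using assms qfun_def by blast
  show ?thesis unfolding hom_rep[OF r]
    by (rule tendsto_eq_intros refl)+
qed

lemma S_lemma:
  assumes f: "qfun f" and g: "qfun g" and x0: "g x0 < 0"
    and hyp: "\<forall>x. g x \<le> 0 \<longrightarrow> f x \<le> 0"
  shows "\<exists>l\<ge>0. \<forall>w. 0 \<le> l * hom g w - hom f w"
proof -
  have H: "hom f w \<le> 0" if w: "hom g w < 0" for w
  proof -
    obtain x t where wt: "w = (x, t)" by (cases w)
    show ?thesis
    proof (cases "t = 0")
      case False
      have "t^2 * g ((1 / t) *\<^sub>R x) < 0" using w wt hom_scale[OF g False] by simp
      then have "g ((1 / t) *\<^sub>R x) < 0" using False by (simp add: mult_less_0_iff)
      then have "f ((1 / t) *\<^sub>R x) \<le> 0" using hyp by simp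
      then show ?thesis using wt hom_scale[OF f False] by (simp add: mult_nonneg_nonpos)
    next
      case True
      have ev1: "eventually (\<lambda>s. hom g (x, s) < 0) (at_right 0)"
        using order_tendstoD(2)[OF hom_limit[OF g, of x]] w wt True by simp
      have "eventually (\<lambda>s. hom f (x, s) \<le> 0) (at_right 0)"
        using ev1 eventually_at_right_less[of "0::real"]
      proof eventually_elim
        case (elim s)
        then have "s \<noteq> 0" by simp
        have "s^2 * g ((1 / s) *\<^sub>R x) < 0" using elim hom_scale[OF g \<open>s \<noteq> 0\<close>] by simp
        then have "g ((1 / s) *\<^sub>R x) < 0" using \<open>s \<noteq> 0\<close> by (simp add: mult_less_0_iff)
        then have "f ((1 / s) *\<^sub>R x) \<le> 0" using hyp by simp
        then show ?case using hom_scale[OF f \<open>s \<noteq> 0\<close>] by (simp add: mult_nonneg_nonpos)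
      qed
      then have "hom f (x, 0) \<le> 0"
        by (rule tendsto_upperbound[OF hom_limit[OF f]]) simp
      then show ?thesis using wt True by simp
    qed
  qed
  have "hom g (x0, 1) < 0" using x0 hom_one by metis
  then obtain l where "l \<ge> 0" "\<forall>w. hom f w \<le> l * hom g w"
    using S_hom[OF qform_hom[OF f] qform_hom[OF g], of "(x0, 1)"] H by blast
  then show ?thesis by (intro exI[of _ l]) auto
qed

lemma S_lemma_conv:
  assumes "\<forall>w. 0 \<le> l * hom g w - hom f w" "l \<ge> 0" "g x \<le> 0"
  shows "f x \<le> 0"
proof -
  have "0 \<le> l * g x - f x" using assms(1) hom_one by metis
  moreover have "l * g x \<le> 0" using assms(2,3) by (simp add: mult_nonneg_nonpos)
  ultimately show ?thesis by linarith
qed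

lemma qform_sum:
  fixes \<Phi> :: "'e::real_vector \<Rightarrow> real"
  assumes "qform \<Phi>"
  shows "(\<Sum>a<m. \<Sum>b<m. v a * polar \<Phi> (e a) (e b) * v b) = \<Phi> (\<Sum>a<m. v a *\<^sub>R e a)"
proof -
  obtain \<beta> where b: "bilinear \<beta>" "\<forall>w. \<Phi> w = \<beta> w w" using assms qform_def by blast
  have "\<Phi> (\<Sum>a<m. v a *\<^sub>R e a) = (\<Sum>(a, c)\<in>{..<m} \<times> {..<m}. \<beta> (v a *\<^sub>R e a) (v c *\<^sub>R e c))"
    using b bilinear_sum[OF b(1)] by simp
  also have "\<dots> = (\<Sum>a<m. \<Sum>c<m. v a * v c * \<beta> (e a) (e c))"
    by (simp add: sum.cartesian_product bilinear_lmul[OF b(1)] bilinear_rmul[OF b(1)] mult_ac)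
  finally have 1: "\<Phi> (\<Sum>a<m. v a *\<^sub>R e a) = (\<Sum>a<m. \<Sum>c<m. v a * v c * \<beta> (e a) (e c))" .
  have 2: "(\<Sum>a<m. \<Sum>c<m. v a * v c * \<beta> (e c) (e a)) = (\<Sum>a<m. \<Sum>c<m. v a * v c * \<beta> (e a) (e c))"
    by (subst sum.swap) (simp add: mult.commute)
  have "(\<Sum>a<m. \<Sum>b<m. v a * polar \<Phi> (e a) (e b) * v b)
      = (\<Sum>a<m. \<Sum>c<m. v a * v c * \<beta> (e a) (e c) + v a * v c * \<beta> (e c) (e a)) / 2"
    by (simp add: qform_polar[OF b] sum_divide_distrib algebra_simps)
  also have "\<dots> = ((\<Sum>a<m. \<Sum>c<m. v a * v c * \<beta> (e a) (e c)) + (\<Sum>a<m. \<Sum>c<m. v a * v c * \<beta> (e c) (e a))) / 2"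
    by (simp add: sum.distrib)
  finally show ?thesis using 1 2 by simp
qed

lemma psd_qform:
  fixes \<Phi> :: "'e::euclidean_space \<Rightarrow> real"
  assumes q: "qform \<Phi>" and e: "bij_betw e {0..<DIM('e)} Basis"
  shows "psd DIM('e) (\<lambda>a b. polar \<Phi> (e a) (e b)) \<longleftrightarrow> (\<forall>w. 0 \<le> \<Phi> w)"
proof
  assume "\<forall>w. 0 \<le> \<Phi> w"
  then show "psd DIM('e) (\<lambda>a b. polar \<Phi> (e a) (e b))"
    unfolding psd_def qform_sum[OF q] by (simp add: polar_def add.commute)
next
  assume p: "psd DIM('e) (\<lambda>a b. polar \<Phi> (e a) (e b))"
  show "\<forall>w. 0 \<le> \<Phi> w"
  proof
    fix w :: 'e
    have "(\<Sum>a<DIM('e). inner w (e a) *\<^sub>R e a) = (\<Sum>b\<in>Basis. inner w b *\<^sub>R b)"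
      unfolding lessThan_atLeast0 by (rule sum.reindex_bij_betw[OF e])
    also have "\<dots> = w" by (rule euclidean_representation)
    finally have "w = (\<Sum>a<DIM('e). inner w (e a) *\<^sub>R e a)" by simp
    then show "0 \<le> \<Phi> w" using p unfolding psd_def qform_sum[OF q] by metis
  qed
qed

lemma subspace_range:
  fixes W :: "'a::euclidean_space set"
  assumes "subspace W"
  shows "\<exists>P::'a\<Rightarrow>'a. linear P \<and> range P = W"
proof -
  obtain B where B: "B \<subseteq> W" "independent B" "W \<subseteq> span B"
    by (rule basis_exists[of W])
  have "span B = W" by (rule span_subspace[OF B(1) B(3) assms])
  have "\<exists>g::'a\<Rightarrow>'a. linear g \<and> (\<forall>x\<in>B. g x = id x) \<and> range g = span (id ` B)"
    by (rule linear_independent_extend_subspace[OF B(2)])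
  then show ?thesis using \<open>span B = W\<close> by auto
qed

lemma linear_cmul_real: "linear (f::'a::real_vector \<Rightarrow> real) \<Longrightarrow> linear (\<lambda>x. a * f x)"
  using linear_compose_scale_right[of f a] by simp

definition aff :: "('a::real_vector \<Rightarrow> real) \<Rightarrow> bool" where
  "aff f \<longleftrightarrow> (\<exists>L c. linear L \<and> (\<forall>x. f x = L x + c))"

lemma qfun_of_aff: "aff f \<Longrightarrow> qfun f"
proof -
  assume "aff f"
  then obtain L c where "linear L" "\<forall>x. f x = L x + c" unfolding aff_def by blast
  moreover have "bilinear (\<lambda>x y::'a. 0::real)" by (simp add: bilinear_def linear_iff)
  ultimately show ?thesis unfolding qfun_def
    by (intro exI[of _ "\<lambda>x y. 0"] exI[of _ L] exI[of _ c]) simp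
qed

lemma aff_const: "aff (\<lambda>x. c)"
  unfolding aff_def by (intro exI[of _ "\<lambda>x. 0"] exI[of _ c]) (simp add: linear_iff)

lemma qfun_const: "qfun (\<lambda>x. c)"
  by (rule qfun_of_aff[OF aff_const])

lemma aff_cmul: "aff f \<Longrightarrow> aff (\<lambda>x. a * f x)"
proof -
  assume "aff f"
  then obtain L c where "linear L" "\<forall>x. f x = L x + c" unfolding aff_def by blast
  moreover have "linear (\<lambda>x. a * L x)" using calculation(1) by (rule linear_cmul_real)
  ultimately show ?thesis unfolding aff_def
    by (intro exI[of _ "\<lambda>x. a * L x"] exI[of _ "a * c"]) (simp add: algebra_simps)
qed

lemma qfun_mult:
  assumes "aff f" "aff g" shows "qfun (\<lambda>x. f x * g x)"
proof -
  obtain L1 c1 where 1: "linear L1" "\<forall>x. f x = L1 x + c1" using assms aff_def by blast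
  obtain L2 c2 where 2: "linear L2" "\<forall>x. g x = L2 x + c2" using assms aff_def by blast
  have b: "bilinear (\<lambda>x y. L1 x * L2 y)" using 1(1) 2(1)
    by (intro bilinearI) (simp_all add: linear_add linear_scale algebra_simps)
  have l: "linear (\<lambda>x. c2 * L1 x + c1 * L2 x)" using 1(1) 2(1)
    by (intro linear_compose_add linear_cmul_real)
  have "\<forall>x. f x * g x = L1 x * L2 x + (c2 * L1 x + c1 * L2 x) + c1 * c2"
    using 1(2) 2(2) by (simp add: algebra_simps)
  then show ?thesis unfolding qfun_def using b l by blast
qed

lemma qfun_add:
  assumes "qfun f" "qfun g" shows "qfun (\<lambda>x. f x + g x)"
proof -
  obtain B1 L1 c1 where 1: "bilinear B1" "linear L1" "\<forall>x. f x = B1 x x + L1 x + c1" using assms qfun_def by blast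
  obtain B2 L2 c2 where 2: "bilinear B2" "linear L2" "\<forall>x. g x = B2 x x + L2 x + c2" using assms qfun_def by blast
  have b: "bilinear (\<lambda>x y. B1 x y + B2 x y)" using 1(1) 2(1)
    unfolding bilinear_def by (auto intro: linear_compose_add)
  have l: "linear (\<lambda>x. L1 x + L2 x)" using 1(2) 2(2)
    by (rule linear_compose_add)
  have "\<forall>x. f x + g x = (B1 x x + B2 x x) + (L1 x + L2 x) + (c1 + c2)"
    using 1(3) 2(3) by simp
  then show ?thesis unfolding qfun_def using b l by blast
qed

lemma qfun_cmul:
  assumes "qfun f" shows "qfun (\<lambda>x. a * f x)"
proof -
  obtain B1 L1 c1 where 1: "bilinear B1" "linear L1" "\<forall>x. f x = B1 x x + L1 x + c1" using assms qfun_def by blast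
  have b: "bilinear (\<lambda>x y. a * B1 x y)" using 1(1)
    unfolding bilinear_def by (auto intro: linear_cmul_real)
  have l: "linear (\<lambda>x. a * L1 x)" using 1(2)
    by (rule linear_cmul_real)
  have "\<forall>x. a * f x = a * B1 x x + a * L1 x + a * c1"
    using 1(3) by (simp add: algebra_simps)
  then show ?thesis unfolding qfun_def using b l by blast
qed

lemma qfun_sum:
  assumes "finite S" "\<forall>i\<in>S. qfun (f i)" shows "qfun (\<lambda>x. \<Sum>i\<in>S. f i x)"
  using assms
proof (induction S rule: finite_induct)
  case empty then show ?case using qfun_const[of 0] by simp
next
  case (insert a S)
  have "qfun (\<lambda>x. f a x + (\<Sum>i\<in>S. f i x))"
    by (rule qfun_add) (use insert in auto)
  moreover have "(\<lambda>x. \<Sum>i\<in>insert a S. f i x) = (\<lambda>x. f a x + (\<Sum>i\<in>S. f i x))"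
    using insert(1,2) by simp
  ultimately show ?case by (simp only:)
qed

lemma aff_entry:
  fixes P :: "real^'n^'m \<Rightarrow> real^'n^'m"
  assumes "linear P"
  shows "aff (\<lambda>D. (M + P D) $ i $ j)"
proof -
  have "linear (\<lambda>D. P D $ i $ j)" using assms
    unfolding linear_iff by (simp add: linear_add linear_scale)
  then show ?thesis unfolding aff_def
    by (intro exI[of _ "\<lambda>D. P D $ i $ j"] exI[of _ "M $ i $ j"]) simp
qed

lemma inner_mv:
  fixes h x :: "real^'n" and M :: "real^'n^'n"
  shows "inner h (M *v x) = (\<Sum>j\<in>UNIV. x$j * (\<Sum>a\<in>UNIV. h$a * M$a$j))"
proof -
  have "inner h (M *v x) = (\<Sum>a\<in>UNIV. \<Sum>j\<in>UNIV. h$a * (M$a$j * x$j))"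
    by (simp add: inner_vec_def matrix_vector_mult_def sum_distrib_left)
  also have "\<dots> = (\<Sum>j\<in>UNIV. \<Sum>a\<in>UNIV. x$j * (h$a * M$a$j))"
    by (subst sum.swap) (simp add: mult_ac)
  finally show ?thesis by (simp add: sum_distrib_left)
qed

lemma hom_add: "hom (\<lambda>D. f D + g D) w = hom f w + hom g w"
  by (simp add: hom_def field_simps)

lemma hom_cmul: "hom (\<lambda>D. a * f D) w = a * hom f w"
  by (simp add: hom_def field_simps)

lemma hom_const: "hom (\<lambda>D. k) w = (snd w)^2 * k"
  by (simp add: hom_def)

lemma hom_sum: "finite S \<Longrightarrow> hom (\<lambda>D. \<Sum>j\<in>S. f j D) w = (\<Sum>j\<in>S. hom (f j) w)"
proof (induction S rule: finite_induct)
  case empty then show ?case using hom_const[of 0 w] by simp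
next
  case (insert a S)
  have "hom (\<lambda>D. \<Sum>j\<in>insert a S. f j D) w = hom (\<lambda>D. f a D + (\<Sum>j\<in>S. f j D)) w"
    using insert(1,2) by simp
  also have "\<dots> = hom (f a) w + hom (\<lambda>D. \<Sum>j\<in>S. f j D) w" by (rule hom_add)
  finally show ?case using insert by simp
qed

lemma hom_lin:
  "finite S \<Longrightarrow> hom (\<lambda>D. (\<Sum>j\<in>S. c j * \<phi> j D) + k) w = (\<Sum>j\<in>S. c j * hom (\<phi> j) w) + (snd w)^2 * k"
  by (simp add: hom_add hom_sum hom_cmul hom_const)

lemma polar_add: "polar (\<lambda>w. f w + g w) u v = polar f u v + polar g u v"
  by (simp add: polar_def field_simps)

lemma polar_cmul: "polar (\<lambda>w. a * f w) u v = a * polar f u v"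
  by (simp add: polar_def field_simps)

lemma polar_sum: "finite S \<Longrightarrow> polar (\<lambda>w. \<Sum>j\<in>S. f j w) u v = (\<Sum>j\<in>S. polar (f j) u v)"
proof (induction S rule: finite_induct)
  case empty then show ?case by (simp add: polar_def)
next
  case (insert a S)
  have "polar (\<lambda>w. \<Sum>j\<in>insert a S. f j w) u v = polar (\<lambda>w. f a w + (\<Sum>j\<in>S. f j w)) u v"
    using insert(1,2) by simp
  also have "\<dots> = polar (f a) u v + polar (\<lambda>w. \<Sum>j\<in>S. f j w) u v" by (rule polar_add)
  finally show ?case using insert by simp
qed

lemma polar_comb:
  "finite S \<Longrightarrow> polar (\<lambda>w. l * G w + (-1) * ((\<Sum>j\<in>S. c j * H j w) + K w)) u v
   = l * polar G u v + (\<Sum>j\<in>S. c j * (- polar (H j) u v)) + (- polar K u v)"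
proof -
  assume S: "finite S"
  have "polar (\<lambda>w. l * G w + (-1) * ((\<Sum>j\<in>S. c j * H j w) + K w)) u v
      = polar (\<lambda>w. l * G w) u v + polar (\<lambda>w. (-1) * ((\<Sum>j\<in>S. c j * H j w) + K w)) u v"
    by (rule polar_add)
  also have "\<dots> = l * polar G u v + (-1) * polar (\<lambda>w. (\<Sum>j\<in>S. c j * H j w) + K w) u v"
    by (simp only: polar_cmul)
  also have "polar (\<lambda>w. (\<Sum>j\<in>S. c j * H j w) + K w) u v = polar (\<lambda>w. \<Sum>j\<in>S. c j * H j w) u v + polar K u v"
    by (rule polar_add)
  also have "polar (\<lambda>w. \<Sum>j\<in>S. c j * H j w) u v = (\<Sum>j\<in>S. polar (\<lambda>w. c j * H j w) u v)"
    by (rule polar_sum[OF S])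
  also have "\<dots> = (\<Sum>j\<in>S. c j * polar (H j) u v)" by (simp only: polar_cmul)
  finally show ?thesis by (simp add: sum_negf)
qed

lemma qfun_phi2:
  fixes P :: "real^'n^'n \<Rightarrow> real^'n^'n" and h :: "real^'n"
  assumes "linear P"
  shows "qfun (\<lambda>D. \<Sum>a\<in>UNIV. h$a * (Astar + P D)$a$j)"
  by (intro qfun_sum ballI qfun_of_aff aff_cmul aff_entry assms) simp

lemma qfun_phi3:
  fixes P :: "real^'n^'n \<Rightarrow> real^'n^'n" and h :: "real^'n"
  assumes "linear P"
  shows "qfun (\<lambda>D. \<Sum>a\<in>UNIV. h$a * ((Astar + P D) ** (Astar + P D))$a$j)"
proof -
  have e: "(\<lambda>D. \<Sum>a\<in>UNIV. h$a * ((Astar + P D) ** (Astar + P D))$a$j)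
    = (\<lambda>D. \<Sum>a\<in>UNIV. \<Sum>k\<in>UNIV. (h$a * (Astar + P D)$a$k) * (Astar + P D)$k$j)"
    by (simp add: matrix_matrix_mult_def sum_distrib_left mult.assoc)
  show ?thesis unfolding e
    by (intro qfun_sum ballI qfun_mult aff_cmul aff_entry assms) simp_all
qed

lemma qfun_g:
  fixes P :: "real^'n^'n \<Rightarrow> real^'n^'n" and q :: "real^'n^'n \<Rightarrow> real"
  assumes "linear P" "is_quadratic q"
  shows "qfun (\<lambda>D. q (Astar + P D))"
proof -
  obtain Q L c0 where qe: "\<forall>A. q A = (\<Sum>i\<in>UNIV. \<Sum>j\<in>UNIV. \<Sum>k\<in>UNIV. \<Sum>l\<in>UNIV. Q i j k l * (A$i$j) * (A$k$l))
              + (\<Sum>i\<in>UNIV. \<Sum>j\<in>UNIV. L i j * (A$i$j)) + c0"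
    using assms(2) unfolding is_quadratic_def by blast
  have e: "(\<lambda>D. q (Astar + P D)) = (\<lambda>D. ((\<Sum>i\<in>UNIV. \<Sum>j\<in>UNIV. \<Sum>k\<in>UNIV. \<Sum>l\<in>UNIV.
       (Q i j k l * (Astar + P D)$i$j) * (Astar + P D)$k$l)
     + (\<Sum>i\<in>UNIV. \<Sum>j\<in>UNIV. L i j * (Astar + P D)$i$j)) + c0)"
    using qe by simp
  show ?thesis unfolding e
    by (intro qfun_add qfun_const qfun_sum ballI qfun_mult qfun_of_aff aff_cmul aff_entry assms(1)) simp_all
qed

definition Wset :: "real^'n^'n \<Rightarrow> (nat \<Rightarrow> real^'n) \<Rightarrow> nat \<Rightarrow> (real^'n^'n) set" where
  "Wset Astar xs k = {D. \<forall>j<k. D *v xs j = 0 \<and> D *v (Astar *v xs j) = 0}"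

lemma Wset_subspace: "subspace (Wset Astar xs k)"
  unfolding subspace_def Wset_def
  by (auto simp: matrix_vector_mult_add_rdistrib scaleR_matrix_vector_assoc[symmetric])

lemma Uk_char:
  fixes P :: "real^'n^'n \<Rightarrow> real^'n^'n"
  assumes P: "range P = Wset Astar xs k"
  shows "A \<in> Uk q Astar xs k \<longleftrightarrow> (\<exists>D. A = Astar + P D \<and> q (Astar + P D) \<le> 0)"
proof
  assume A: "A \<in> Uk q Astar xs k"
  have "A - Astar \<in> Wset Astar xs k"
    using A unfolding Uk_def U0_def Wset_def
    by (auto simp: matrix_vector_mult_diff_rdistrib matrix_vector_mul_assoc[symmetric])
  then obtain D where "P D = A - Astar" using P by (metis rangeE)
  then show "\<exists>D. A = Astar + P D \<and> q (Astar + P D) \<le> 0"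
    using A unfolding Uk_def U0_def by (intro exI[of _ D]) auto
next
  assume "\<exists>D. A = Astar + P D \<and> q (Astar + P D) \<le> 0"
  then obtain D where D: "A = Astar + P D" "q A \<le> 0" by blast
  have W: "P D \<in> Wset Astar xs k" using P by blast
  have 1: "A *v xs j = Astar *v xs j" if "j < k" for j
    using W that unfolding D(1) Wset_def by (simp add: matrix_vector_mult_add_rdistrib)
  have 2: "(A ** A) *v xs j = (Astar ** Astar) *v xs j" if "j < k" for j
  proof -
    have "(A ** A) *v xs j = A *v (Astar *v xs j)"
      by (simp add: matrix_vector_mul_assoc[symmetric] 1[OF that])
    also have "\<dots> = Astar *v (Astar *v xs j)"
      using W that unfolding D(1) Wset_def by (simp add: matrix_vector_mult_add_rdistrib)
    finally show ?thesis by (simp add: matrix_vector_mul_assoc)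
  qed
  show "A \<in> Uk q Astar xs k" unfolding Uk_def U0_def using D(2) 1 2 by simp
qed

lemma degenerate:
  fixes P :: "real^'n^'n \<Rightarrow> real^'n^'n"
  assumes P: "linear P" "range P = Wset Astar xs k"
    and sc: "strictly_convex q" and As: "Astar \<in> U0 q"
    and nos: "\<forall>D. q (Astar + P D) \<ge> 0"
  shows "Uk q Astar xs k = {Astar}"
proof
  show "{Astar} \<subseteq> Uk q Astar xs k"
    using Uk_char[OF P(2), of Astar q] As unfolding U0_def
    by (auto intro!: exI[of _ 0] simp: linear_0[OF P(1)])
  show "Uk q Astar xs k \<subseteq> {Astar}"
  proof
    fix A assume A: "A \<in> Uk q Astar xs k"
    then obtain D where D: "A = Astar + P D" "q (Astar + P D) \<le> 0"
      using Uk_char[OF P(2)] by blast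
    show "A \<in> {Astar}"
    proof (rule ccontr)
      assume "A \<notin> {Astar}"
      then have ne: "A \<noteq> Astar" by simp
      have "q ((1 - 1/2) *\<^sub>R A + (1/2) *\<^sub>R Astar) < (1 - 1/2) * q A + (1/2) * q Astar"
      proof -
        have "(0::real) < 1/2" "(1::real)/2 < 1" by simp_all
        then show ?thesis using sc ne unfolding strictly_convex_def by blast
      qed
      also have "\<dots> \<le> 0" using D As unfolding U0_def by simp
      finally have lt: "q ((1 - 1/2) *\<^sub>R A + (1/2) *\<^sub>R Astar) < 0" .
      have "(1 - 1/2) *\<^sub>R A + (1/2) *\<^sub>R Astar = Astar + P ((1/2) *\<^sub>R D)"
        unfolding D(1) linear_cmul[OF P(1)] by (simp add: vec_eq_iff field_simps)
      then have "q (Astar + P ((1/2) *\<^sub>R D)) < 0" using lt by simp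
      then show False using nos by (meson not_le)
    qed
  qed
qed

definition phiF :: "nat \<Rightarrow> (nat \<Rightarrow> real^'n) \<Rightarrow> real^'n^'n \<Rightarrow> (real^'n^'n \<Rightarrow> real^'n^'n) \<Rightarrow> nat \<Rightarrow> 'n \<Rightarrow> real^'n^'n \<Rightarrow> real" where
  "phiF r h Astar P t j D = (if t < r then (\<Sum>a\<in>UNIV. h t $ a * (Astar + P D)$a$j)
      else (\<Sum>a\<in>UNIV. h (t - r) $ a * ((Astar + P D) ** (Astar + P D))$a$j))"

definition bbF :: "nat \<Rightarrow> (nat \<Rightarrow> real) \<Rightarrow> nat \<Rightarrow> real" where
  "bbF r b t = (if t < r then b t else b (t - r))"

definition fF :: "nat \<Rightarrow> (nat \<Rightarrow> real^'n) \<Rightarrow> (nat \<Rightarrow> real) \<Rightarrow> real^'n^'n \<Rightarrow> (real^'n^'n \<Rightarrow> real^'n^'n) \<Rightarrow> nat \<Rightarrow> real^'n \<Rightarrow> real^'n^'n \<Rightarrow> real" where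
  "fF r h b Astar P t x D = (\<Sum>j\<in>UNIV. x$j * phiF r h Astar P t j D) + (- bbF r b t)"

lemma fF_eq:
  "fF r h b Astar P t x D = (if t < r then inner (h t) ((Astar + P D) *v x) - b t
     else inner (h (t - r)) (((Astar + P D) ** (Astar + P D)) *v x) - b (t - r))"
  unfolding fF_def phiF_def bbF_def inner_mv by simp

lemma qfun_fF:
  assumes "linear P" shows "qfun (fF r h b Astar P t x)"
proof -
  have "qfun (\<lambda>D. (\<Sum>j\<in>UNIV. x$j * phiF r h Astar P t j D) + (- bbF r b t))"
  proof (intro qfun_add qfun_const qfun_sum ballI qfun_cmul)
    fix j
    show "qfun (phiF r h Astar P t j)"
    proof (cases "t < r")
      case True
      then have "phiF r h Astar P t j = (\<lambda>D. \<Sum>a\<in>UNIV. h t $ a * (Astar + P D)$a$j)"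
        unfolding phiF_def by simp
      then show ?thesis using qfun_phi2[OF assms] by simp
    next
      case False
      then have "phiF r h Astar P t j = (\<lambda>D. \<Sum>a\<in>UNIV. h (t - r) $ a * ((Astar + P D) ** (Astar + P D))$a$j)"
        unfolding phiF_def by simp
      then show ?thesis using qfun_phi3[OF assms] by simp
    qed
  qed simp
  then show ?thesis unfolding fF_def[abs_def] by simp
qed

lemma robust_t:
  fixes P :: "real^'n^'n \<Rightarrow> real^'n^'n"
  assumes P: "range P = Wset Astar xs k"
  shows "(\<forall>D. q (Astar + P D) \<le> 0 \<longrightarrow> fF r h b Astar P t x D \<le> 0) \<longleftrightarrow>
    (if t < r then (\<forall>A\<in>Uk q Astar xs k. inner (h t) (A *v x) \<le> b t)
     else (\<forall>A\<in>Uk q Astar xs k. inner (h (t - r)) ((A ** A) *v x) \<le> b (t - r)))"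
  using Uk_char[OF P] unfolding fF_eq by auto

lemma sum_delta_mult:
  fixes N :: nat assumes "t < N"
  shows "(\<Sum>l<N. z l * (if l = t then c else 0)) = z t * (c::real)"
proof -
  have "(\<Sum>l<N. z l * (if l = t then c else 0)) = (\<Sum>l<N. if l = t then z l * c else 0)"
    by (rule sum.cong) auto
  also have "\<dots> = z t * c" using assms by (subst sum.delta) auto
  finally show ?thesis .
qed

lemma lmi_psd:
  fixes e :: "nat \<Rightarrow> (real^'n^'n) \<times> real"
  assumes e: "bij_betw e {0..<DIM((real^'n^'n) \<times> real)} Basis" and g: "qfun g" and f: "qfun f"
  shows "psd DIM((real^'n^'n) \<times> real) (\<lambda>a c. polar (\<lambda>w. l * hom g w + (-1) * hom f w) (e a) (e c))
     \<longleftrightarrow> (\<forall>w. 0 \<le> l * hom g w - hom f w)"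
proof -
  have "psd DIM((real^'n^'n) \<times> real) (\<lambda>a c. polar (\<lambda>w. l * hom g w + (-1) * hom f w) (e a) (e c))
     \<longleftrightarrow> (\<forall>w. 0 \<le> l * hom g w + (-1) * hom f w)"
    by (rule psd_qform[OF qform_lin[OF qform_hom[OF g] qform_hom[OF f], of l "-1"] e])
  moreover have "(\<forall>w. 0 \<le> l * hom g w + (-1) * hom f w) \<longleftrightarrow> (\<forall>w. 0 \<le> l * hom g w - hom f w)"
    by simp
  ultimately show ?thesis by simp
qed

lemma matrix_eq:
  fixes N :: nat and z :: "nat \<Rightarrow> real" and e :: "nat \<Rightarrow> (real^'n^'n) \<times> real"
    and g :: "real^'n^'n \<Rightarrow> real"
  assumes "t < N"
  shows "aff_matrix N (\<lambda>a c. - polar (\<lambda>w. (snd w)^2 * (- bbF r b t)) (e a) (e c))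
     (\<lambda>j a c. - polar (hom (phiF r h Astar P t j)) (e a) (e c))
     (\<lambda>l a c. if l = t then polar (hom g) (e a) (e c) else 0) x z
   = (\<lambda>a c. polar (\<lambda>w. z t * hom g w + (-1) * hom (fF r h b Astar P t x) w) (e a) (e c))"
proof -
  have hf: "(\<lambda>w. z t * hom g w + (-1) * hom (fF r h b Astar P t x) w)
     = (\<lambda>w. z t * hom g w + (-1) * ((\<Sum>j\<in>UNIV. x$j * hom (phiF r h Astar P t j) w) + (snd w)^2 * (- bbF r b t)))"
  proof
    fix w
    have "hom (fF r h b Astar P t x) w = hom (\<lambda>D. (\<Sum>j\<in>UNIV. x$j * phiF r h Astar P t j D) + (- bbF r b t)) w"
      by (simp add: fF_def[abs_def])
    also have "\<dots> = (\<Sum>j\<in>UNIV. x$j * hom (phiF r h Astar P t j) w) + (snd w)^2 * (- bbF r b t)"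
      by (rule hom_lin) simp
    finally show "z t * hom g w + (-1) * hom (fF r h b Astar P t x) w
      = z t * hom g w + (-1) * ((\<Sum>j\<in>UNIV. x$j * hom (phiF r h Astar P t j) w) + (snd w)^2 * (- bbF r b t))"
      by simp
  qed
  show ?thesis
  proof (intro ext)
    fix a c
    have "polar (\<lambda>w. z t * hom g w + (-1) * hom (fF r h b Astar P t x) w) (e a) (e c)
      = z t * polar (hom g) (e a) (e c) + (\<Sum>j\<in>UNIV. x$j * (- polar (hom (phiF r h Astar P t j)) (e a) (e c)))
        + (- polar (\<lambda>w. (snd w)^2 * (- bbF r b t)) (e a) (e c))"
      unfolding hf by (rule polar_comb) simp
    moreover have "(\<Sum>l<N. z l * (if l = t then polar (hom g) (e a) (e c) else 0)) = z t * polar (hom g) (e a) (e c)"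
      by (rule sum_delta_mult[OF assms])
    ultimately show "aff_matrix N (\<lambda>a c. - polar (\<lambda>w. (snd w)^2 * (- bbF r b t)) (e a) (e c))
     (\<lambda>j a c. - polar (hom (phiF r h Astar P t j)) (e a) (e c))
     (\<lambda>l a c. if l = t then polar (hom g) (e a) (e c) else 0) x z a c
     = polar (\<lambda>w. z t * hom g w + (-1) * hom (fF r h b Astar P t x) w) (e a) (e c)"
      unfolding aff_matrix_def by simp
  qed
qed

lemma split_gen:
  fixes r s :: nat
  shows "(\<forall>i<r + s. if i < r then A i else B (i - r)) \<longleftrightarrow> (\<forall>i<r. A i) \<and> (\<forall>t<s. B t)"
proof safe
  fix i assume H: "\<forall>i<r + s. if i < r then A i else B (i - r)"
  show "i < r \<Longrightarrow> A i" using H[rule_format, of i] by (simp add: trans_less_add1)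
  assume "i < s" then show "B i" using H[rule_format, of "r + i"] by simp
next
  fix i assume "\<forall>i<r. A i" "\<forall>t<s. B t" "i < r + s"
  then show "if i < r then A i else B (i - r)" by auto
qed

lemma inf_part:
  fixes c :: "real^'n"
  assumes "\<forall>x. x \<in> R \<longleftrightarrow> (\<exists>z. S x z)"
  shows "(INF x\<in>R. c \<bullet> x) = (INF xz\<in>{(x, z). S x z}. c \<bullet> fst xz)"
proof -
  have "R = fst ` {(x, z). S x z}" using assms by force
  then show ?thesis by (simp add: image_comp o_def)
qed

theorem theorem9:
  fixes r k :: nat
    and h :: "nat \<Rightarrow> real^'n" and b :: "nat \<Rightarrow> real"
    and q :: "real^'n^'n \<Rightarrow> real" and Astar :: "real^'n^'n"
    and xs :: "nat \<Rightarrow> real^'n" and c :: "real^'n"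
  assumes "is_quadratic q" and "strictly_convex q"
    and "Astar \<in> U0 q"
  shows "\<exists>N a0 ax az m F0 Fx Fz.
           (\<forall>t<2*r. m t \<le> CARD('n)^2 + 1) \<and>
           (\<forall>x. x \<in> robust_feasible r h b q Astar xs k \<longleftrightarrow>
                  (\<exists>z. sdp_constraints N (3*r) (2*r) a0 ax az m F0 Fx Fz x z)) \<and>
           (INF x\<in>robust_feasible r h b q Astar xs k. c \<bullet> x) =
           (INF xz\<in>{(x, z). sdp_constraints N (3*r) (2*r) a0 ax az m F0 Fx Fz x z}. c \<bullet> fst xz)"
proof -
  obtain P :: "real^'n^'n \<Rightarrow> real^'n^'n" where P: "linear P" "range P = Wset Astar xs k"
    using subspace_range[OF Wset_subspace[of Astar xs k]] by blast
  define g where "g = (\<lambda>D. q (Astar + P D))"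
  have qg: "qfun g" unfolding g_def by (rule qfun_g[OF P(1) assms(1)])
  define RF where "RF = robust_feasible r h b q Astar xs k"
  have RFc: "x \<in> RF \<longleftrightarrow> (\<forall>i<r. h i \<bullet> x \<le> b i) \<and>
      (\<forall>i<r. \<forall>A\<in>Uk q Astar xs k. h i \<bullet> (A *v x) \<le> b i) \<and>
      (\<forall>i<r. \<forall>A\<in>Uk q Astar xs k. h i \<bullet> ((A ** A) *v x) \<le> b i)" for x
    unfolding RF_def robust_feasible_def polyS_def by auto
  have key: "\<exists>N a0 ax az m F0 Fx Fz. (\<forall>t<2*r. m t \<le> CARD('n)^2 + 1) \<and>
     (\<forall>x. x \<in> RF \<longleftrightarrow> (\<exists>z. sdp_constraints N (3*r) (2*r) a0 ax az m F0 Fx Fz x z))"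
  proof (cases "\<exists>D0. g D0 < 0")
    case True
    then obtain D0 where D0: "g D0 < 0" by blast
    obtain e :: "nat \<Rightarrow> (real^'n^'n) \<times> real" where e: "bij_betw e {0..<DIM((real^'n^'n) \<times> real)} Basis"
      using ex_bij_betw_nat_finite[of "Basis :: ((real^'n^'n) \<times> real) set"] by auto
    define M where "M = DIM((real^'n^'n) \<times> real)"
    have Mle: "M \<le> CARD('n)^2 + 1" unfolding M_def by (simp add: power2_eq_square)
    define a0 :: "nat \<Rightarrow> real" where "a0 = (\<lambda>i. if i < r then - b i else 0)"
    define ax :: "nat \<Rightarrow> real^'n" where "ax = (\<lambda>i. if i < r then h i else 0)"
    define az :: "nat \<Rightarrow> nat \<Rightarrow> real" where "az = (\<lambda>i l. if i < r then 0 else if l = i - r then -1 else 0)"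
    define F0 :: "nat \<Rightarrow> nat \<Rightarrow> nat \<Rightarrow> real"
      where "F0 = (\<lambda>t a c. - polar (\<lambda>w. (snd w)^2 * (- bbF r b t)) (e a) (e c))"
    define Fx :: "nat \<Rightarrow> 'n \<Rightarrow> nat \<Rightarrow> nat \<Rightarrow> real"
      where "Fx = (\<lambda>t j a c. - polar (hom (phiF r h Astar P t j)) (e a) (e c))"
    define Fz :: "nat \<Rightarrow> nat \<Rightarrow> nat \<Rightarrow> nat \<Rightarrow> real"
      where "Fz = (\<lambda>t l a c. if l = t then polar (hom g) (e a) (e c) else 0)"
    have scal: "aff_scalar (2*r) (a0 i) (ax i) (az i) x z = (if i < r then h i \<bullet> x - b i else - z (i - r))"
      if "i < 3*r" for i x z
    proof (cases "i < r")
      case True then show ?thesis unfolding aff_scalar_def a0_def ax_def az_def by simp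
    next
      case False
      have "(\<Sum>l<2*r. az i l * z l) = (\<Sum>l<2*r. z l * (if l = i - r then -1 else 0))"
        unfolding az_def using False by (simp add: mult.commute)
      also have "\<dots> = z (i - r) * (-1)" by (rule sum_delta_mult) (use that False in simp)
      finally show ?thesis unfolding aff_scalar_def a0_def ax_def using False by simp
    qed
    have mat: "psd M (aff_matrix (2*r) (F0 t) (Fx t) (Fz t) x z)
        \<longleftrightarrow> (\<forall>w. 0 \<le> z t * hom g w - hom (fF r h b Astar P t x) w)" if "t < 2*r" for t x z
    proof -
      have "aff_matrix (2*r) (F0 t) (Fx t) (Fz t) x z
          = (\<lambda>a c. polar (\<lambda>w. z t * hom g w + (-1) * hom (fF r h b Astar P t x) w) (e a) (e c))"
        unfolding F0_def Fx_def Fz_def by (rule matrix_eq[OF that])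
      then show ?thesis unfolding M_def using lmi_psd[OF e qg qfun_fF[OF P(1)]] by simp
    qed
    have Sl: "(\<forall>D. g D \<le> 0 \<longrightarrow> fF r h b Astar P t x D \<le> 0) \<longleftrightarrow>
        (\<exists>l\<ge>0. \<forall>w. 0 \<le> l * hom g w - hom (fF r h b Astar P t x) w)" for t x
    proof
      assume "\<forall>D. g D \<le> 0 \<longrightarrow> fF r h b Astar P t x D \<le> 0"
      then show "\<exists>l\<ge>0. \<forall>w. 0 \<le> l * hom g w - hom (fF r h b Astar P t x) w"
        by (rule S_lemma[OF qfun_fF[OF P(1)] qg D0])
    next
      assume "\<exists>l\<ge>0. \<forall>w. 0 \<le> l * hom g w - hom (fF r h b Astar P t x) w"
      then show "\<forall>D. g D \<le> 0 \<longrightarrow> fF r h b Astar P t x D \<le> 0" using S_lemma_conv by blast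
    qed
    have rob: "(\<forall>t<2*r. \<forall>D. g D \<le> 0 \<longrightarrow> fF r h b Astar P t x D \<le> 0) \<longleftrightarrow>
        (\<forall>i<r. \<forall>A\<in>Uk q Astar xs k. h i \<bullet> (A *v x) \<le> b i) \<and>
        (\<forall>i<r. \<forall>A\<in>Uk q Astar xs k. h i \<bullet> ((A ** A) *v x) \<le> b i)" for x
    proof -
      have "(\<forall>t<2*r. \<forall>D. g D \<le> 0 \<longrightarrow> fF r h b Astar P t x D \<le> 0) \<longleftrightarrow>
          (\<forall>t<r + r. if t < r then (\<forall>A\<in>Uk q Astar xs k. h t \<bullet> (A *v x) \<le> b t)
             else (\<forall>A\<in>Uk q Astar xs k. h (t - r) \<bullet> ((A ** A) *v x) \<le> b (t - r)))"
        unfolding g_def using robust_t[OF P(2)] by (simp add: mult_2)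
      also have "\<dots> \<longleftrightarrow> (\<forall>i<r. \<forall>A\<in>Uk q Astar xs k. h i \<bullet> (A *v x) \<le> b i) \<and>
        (\<forall>i<r. \<forall>A\<in>Uk q Astar xs k. h i \<bullet> ((A ** A) *v x) \<le> b i)"
        by (rule split_gen)
      finally show ?thesis .
    qed
    have sdp: "sdp_constraints (2*r) (3*r) (2*r) a0 ax az (\<lambda>_. M) F0 Fx Fz x z \<longleftrightarrow>
        (\<forall>i<r. h i \<bullet> x \<le> b i) \<and>
        (\<forall>t<2*r. z t \<ge> 0 \<and> (\<forall>w. 0 \<le> z t * hom g w - hom (fF r h b Astar P t x) w))" for x z
    proof -
      have "(\<forall>i<3*r. aff_scalar (2*r) (a0 i) (ax i) (az i) x z \<le> 0) \<longleftrightarrow>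
          (\<forall>i<r + 2*r. if i < r then h i \<bullet> x - b i \<le> 0 else - z (i - r) \<le> 0)"
      proof -
        have "3*r = r + 2*r" by simp
        moreover have "(\<forall>i<3*r. aff_scalar (2*r) (a0 i) (ax i) (az i) x z \<le> 0) \<longleftrightarrow>
          (\<forall>i<3*r. if i < r then h i \<bullet> x - b i \<le> 0 else - z (i - r) \<le> 0)"
        proof (intro iffI allI impI)
          fix i assume H: "\<forall>i<3*r. aff_scalar (2*r) (a0 i) (ax i) (az i) x z \<le> 0" and i: "i < 3*r"
          show "if i < r then h i \<bullet> x - b i \<le> 0 else - z (i - r) \<le> 0"
            using H[rule_format, OF i] scal[OF i, of x z] by (cases "i < r") simp_all
        next
          fix i assume H: "\<forall>i<3*r. if i < r then h i \<bullet> x - b i \<le> 0 else - z (i - r) \<le> 0" and i: "i < 3*r"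
          show "aff_scalar (2*r) (a0 i) (ax i) (az i) x z \<le> 0"
            using H[rule_format, OF i] scal[OF i, of x z] by (cases "i < r") simp_all
        qed
        ultimately show ?thesis by simp
      qed
      also have "\<dots> \<longleftrightarrow> (\<forall>i<r. h i \<bullet> x - b i \<le> 0) \<and> (\<forall>t<2*r. - z t \<le> 0)"
        by (rule split_gen)
      finally have sc: "(\<forall>i<3*r. aff_scalar (2*r) (a0 i) (ax i) (az i) x z \<le> 0) \<longleftrightarrow>
          (\<forall>i<r. h i \<bullet> x - b i \<le> 0) \<and> (\<forall>t<2*r. - z t \<le> 0)" .
      show ?thesis unfolding sdp_constraints_def sc using mat by auto
    qed
    show ?thesis
    proof (rule exI[of _ "2*r"], rule exI[of _ a0], rule exI[of _ ax], rule exI[of _ az],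
        rule exI[of _ "\<lambda>_. M"], rule exI[of _ F0], rule exI[of _ Fx], rule exI[of _ Fz], intro conjI)
      show "\<forall>t<2*r. (\<lambda>_. M) t \<le> CARD('n)^2 + 1" using Mle by simp
      show "\<forall>x. x \<in> RF \<longleftrightarrow> (\<exists>z. sdp_constraints (2*r) (3*r) (2*r) a0 ax az (\<lambda>_. M) F0 Fx Fz x z)"
      proof (rule allI)
      fix x
      show "x \<in> RF \<longleftrightarrow> (\<exists>z. sdp_constraints (2*r) (3*r) (2*r) a0 ax az (\<lambda>_. M) F0 Fx Fz x z)"
      proof
        assume x: "x \<in> RF"
        have A: "\<forall>t<2*r. \<forall>D. g D \<le> 0 \<longrightarrow> fF r h b Astar P t x D \<le> 0"
          using rob[of x] x RFc[of x] by simp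
        have ch: "\<forall>t. \<exists>l. t < 2*r \<longrightarrow> l \<ge> 0 \<and> (\<forall>w. 0 \<le> l * hom g w - hom (fF r h b Astar P t x) w)"
        proof
          fix t
          show "\<exists>l. t < 2*r \<longrightarrow> l \<ge> 0 \<and> (\<forall>w. 0 \<le> l * hom g w - hom (fF r h b Astar P t x) w)"
          proof (cases "t < 2*r")
            case True
            then have "\<forall>D. g D \<le> 0 \<longrightarrow> fF r h b Astar P t x D \<le> 0" using A by blast
            then have "\<exists>l\<ge>0. \<forall>w. 0 \<le> l * hom g w - hom (fF r h b Astar P t x) w"
              using Sl[of t x] by blast
            then obtain l where "l \<ge> 0" "\<forall>w. 0 \<le> l * hom g w - hom (fF r h b Astar P t x) w" by blast
            then show ?thesis by (intro exI[of _ l]) simp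
          next
            case False then show ?thesis by simp
          qed
        qed
        then obtain z where z: "\<forall>t. t < 2*r \<longrightarrow> z t \<ge> 0 \<and> (\<forall>w. 0 \<le> z t * hom g w - hom (fF r h b Astar P t x) w)"
          using choice[OF ch] by blast
        show "\<exists>z. sdp_constraints (2*r) (3*r) (2*r) a0 ax az (\<lambda>_. M) F0 Fx Fz x z"
        proof (rule exI[of _ z])
          show "sdp_constraints (2*r) (3*r) (2*r) a0 ax az (\<lambda>_. M) F0 Fx Fz x z"
            unfolding sdp[of x z] using z x RFc[of x] by simp
        qed
      next
        assume "\<exists>z. sdp_constraints (2*r) (3*r) (2*r) a0 ax az (\<lambda>_. M) F0 Fx Fz x z"
        then obtain z where z: "sdp_constraints (2*r) (3*r) (2*r) a0 ax az (\<lambda>_. M) F0 Fx Fz x z" by blast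
        have z1: "\<forall>i<r. h i \<bullet> x \<le> b i" and
          z2: "\<forall>t<2*r. z t \<ge> 0 \<and> (\<forall>w. 0 \<le> z t * hom g w - hom (fF r h b Astar P t x) w)"
          using z unfolding sdp[of x z] by simp_all
        have "\<forall>t<2*r. \<forall>D. g D \<le> 0 \<longrightarrow> fF r h b Astar P t x D \<le> 0"
        proof (intro allI impI)
          fix t D assume "t < 2*r" "g D \<le> 0"
          then show "fF r h b Astar P t x D \<le> 0" using z2 S_lemma_conv[of "z t" g "fF r h b Astar P t x" D] by simp
        qed
        then show "x \<in> RF" using RFc[of x] rob[of x] z1 by simp
      qed
    qed
    qed
  next
    case False
    have Uk1: "Uk q Astar xs k = {Astar}"
      by (rule degenerate[OF P assms(2) assms(3)]) (use False in \<open>auto simp: g_def not_less\<close>)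
    define a0 :: "nat \<Rightarrow> real" where
      "a0 = (\<lambda>i. if i < r then - b i else if i - r < r then - b (i - r) else - b (i - r - r))"
    define ax :: "nat \<Rightarrow> real^'n" where
      "ax = (\<lambda>i. if i < r then h i else if i - r < r then h (i - r) v* Astar else h (i - r - r) v* (Astar ** Astar))"
    define az :: "nat \<Rightarrow> nat \<Rightarrow> real" where "az = (\<lambda>i l. 0)"
    define F0 :: "nat \<Rightarrow> nat \<Rightarrow> nat \<Rightarrow> real" where "F0 = (\<lambda>t a c. 0)"
    define Fx :: "nat \<Rightarrow> 'n \<Rightarrow> nat \<Rightarrow> nat \<Rightarrow> real" where "Fx = (\<lambda>t j a c. 0)"
    define Fz :: "nat \<Rightarrow> nat \<Rightarrow> nat \<Rightarrow> nat \<Rightarrow> real" where "Fz = (\<lambda>t l a c. 0)"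
    have deg: "x \<in> RF \<longleftrightarrow> (\<forall>i<3*r. a0 i + ax i \<bullet> x \<le> 0)" for x
    proof
      assume x: "x \<in> RF"
      have 1: "\<forall>i<r. h i \<bullet> x \<le> b i" and 2: "\<forall>i<r. h i \<bullet> (Astar *v x) \<le> b i"
        and 3: "\<forall>i<r. h i \<bullet> ((Astar ** Astar) *v x) \<le> b i"
        using x RFc[of x] Uk1 by auto
      show "\<forall>i<3*r. a0 i + ax i \<bullet> x \<le> 0"
      proof (intro allI impI)
        fix i assume i: "i < 3*r"
        show "a0 i + ax i \<bullet> x \<le> 0"
        proof (cases "i < r")
          case True then show ?thesis using 1 by (simp add: a0_def ax_def)
        next
          case F1: False
          show ?thesis
          proof (cases "i - r < r")
            case True then show ?thesis using F1 2 by (simp add: a0_def ax_def dot_lmul_matrix)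
          next
            case False
            have "i - r - r < r" using i by simp
            then show ?thesis using F1 False 3 by (simp add: a0_def ax_def dot_lmul_matrix)
          qed
        qed
      qed
    next
      assume H: "\<forall>i<3*r. a0 i + ax i \<bullet> x \<le> 0"
      have 1: "h i \<bullet> x \<le> b i" if "i < r" for i
        using H[rule_format, of i] that by (simp add: a0_def ax_def)
      have 2: "h i \<bullet> (Astar *v x) \<le> b i" if "i < r" for i
        using H[rule_format, of "r + i"] that by (simp add: a0_def ax_def dot_lmul_matrix)
      have 3: "h i \<bullet> ((Astar ** Astar) *v x) \<le> b i" if "i < r" for i
        using H[rule_format, of "r + r + i"] that by (simp add: a0_def ax_def dot_lmul_matrix)
      show "x \<in> RF" using RFc[of x] Uk1 1 2 3 by simp
    qed
    have sdp0: "sdp_constraints 0 (3*r) (2*r) a0 ax az (\<lambda>_. 0) F0 Fx Fz x z \<longleftrightarrow> (\<forall>i<3*r. a0 i + ax i \<bullet> x \<le> 0)" for x z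
      unfolding sdp_constraints_def aff_scalar_def psd_def az_def by simp
    show ?thesis
    proof (rule exI[of _ "0"], rule exI[of _ a0], rule exI[of _ ax], rule exI[of _ az],
        rule exI[of _ "\<lambda>_. 0"], rule exI[of _ F0], rule exI[of _ Fx], rule exI[of _ Fz], intro conjI)
      show "\<forall>t<2*r. (\<lambda>_. 0::nat) t \<le> CARD('n)^2 + 1" by simp
      show "\<forall>x. x \<in> RF \<longleftrightarrow> (\<exists>z. sdp_constraints 0 (3*r) (2*r) a0 ax az (\<lambda>_. 0) F0 Fx Fz x z)"
        using deg sdp0 by simp
    qed
  qed
  then obtain N a0 ax az m F0 Fx Fz where
    K: "\<forall>t<2*r. m t \<le> CARD('n)^2 + 1"
       "\<forall>x. x \<in> RF \<longleftrightarrow> (\<exists>z. sdp_constraints N (3*r) (2*r) a0 ax az m F0 Fx Fz x z)"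
    by blast
  show ?thesis
    by (rule exI[of _ N], rule exI[of _ a0], rule exI[of _ ax], rule exI[of _ az], rule exI[of _ m],
        rule exI[of _ F0], rule exI[of _ Fx], rule exI[of _ Fz])
       (use K inf_part[OF K(2), of c] in \<open>simp add: RF_def\<close>)
qed

end
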